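(* Let $G$ be a graph such that for every edge $e$ of $G$, the induced subgraph $G[A(e)]$ is perfect. Then $\chi(G)\le\frac{\omega(G)^3-\omega(G)^2+2\omega(G)}{2}$.
   Context: All graphs are finite, simple and undirected. For an edge $e=uv$ of $G$, $A(e)$ denotes the set of vertices of $G$ adjacent to neither $u$ nor $v$. $G[S]$ is the subgraph induced by $S$. A graph $F$ is perfect if $\chi(F')=\omega(F')$ for every induced subgraph $F'$ of $F$. $\chi$ is the chromatic number and $\omega$ the clique number. *)

theory Defs
  imports Complex_Main
begin

definition graph :: "'a set \<Rightarrow> ('a \<Rightarrow> 'a \<Rightarrow> bool) \<Rightarrow> bool" where
  "graph V E \<longleftrightarrow> finite V \<and> (\<forall>u v. E u v \<longrightarrow> u \<in> V \<and> v \<in> V)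
     \<and> (\<forall>u v. E u v \<longrightarrow> E v u) \<and> (\<forall>u. \<not> E u u)"

text \<open>All notions below are relative to a vertex set S; the graph (S, E) restricted
  to S is the induced subgraph G[S].\<close>
definition is_clique :: "'a set \<Rightarrow> ('a \<Rightarrow> 'a \<Rightarrow> bool) \<Rightarrow> 'a set \<Rightarrow> bool" where
  "is_clique S E K \<longleftrightarrow> K \<subseteq> S \<and> (\<forall>u\<in>K. \<forall>v\<in>K. u \<noteq> v \<longrightarrow> E u v)"

definition clique_number :: "'a set \<Rightarrow> ('a \<Rightarrow> 'a \<Rightarrow> bool) \<Rightarrow> nat" where
  "clique_number S E = Max (card ` {K. is_clique S E K})"

definition proper_colouring :: "'a set \<Rightarrow> ('a \<Rightarrow> 'a \<Rightarrow> bool) \<Rightarrow> nat \<Rightarrow> ('a \<Rightarrow> nat) \<Rightarrow> bool" where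
  "proper_colouring S E k f \<longleftrightarrow> (\<forall>v\<in>S. f v < k) \<and> (\<forall>u\<in>S. \<forall>v\<in>S. E u v \<longrightarrow> f u \<noteq> f v)"

definition chromatic_number :: "'a set \<Rightarrow> ('a \<Rightarrow> 'a \<Rightarrow> bool) \<Rightarrow> nat" where
  "chromatic_number S E = (LEAST k. \<exists>f. proper_colouring S E k f)"

definition perfect :: "'a set \<Rightarrow> ('a \<Rightarrow> 'a \<Rightarrow> bool) \<Rightarrow> bool" where
  "perfect S E \<longleftrightarrow> (\<forall>T \<subseteq> S. chromatic_number T E = clique_number T E)"

text \<open>A(e) for e = uv: vertices adjacent to neither u nor v.\<close>
definition non_nbrs :: "'a set \<Rightarrow> ('a \<Rightarrow> 'a \<Rightarrow> bool) \<Rightarrow> 'a \<Rightarrow> 'a \<Rightarrow> 'a set" where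
  "non_nbrs V E u v = {w \<in> V. \<not> E w u \<and> \<not> E w v}"

end

theory Submission
  imports Defs
begin

definition colourable :: "'a set \<Rightarrow> ('a \<Rightarrow> 'a \<Rightarrow> bool) \<Rightarrow> nat \<Rightarrow> bool" where
  "colourable S E k \<longleftrightarrow> (\<exists>f. proper_colouring S E k f)"

lemma col_union:
  assumes "colourable A E a" "colourable B E b"
  shows "colourable (A \<union> B) E (a + b)"
proof -
  obtain f where f: "proper_colouring A E a f" using assms(1) colourable_def by blast
  obtain g where g: "proper_colouring B E b g" using assms(2) colourable_def by blast
  have f1: "\<forall>v\<in>A. f v < a" and f2: "\<forall>u\<in>A. \<forall>v\<in>A. E u v \<longrightarrow> f u \<noteq> f v"
    using f unfolding proper_colouring_def by auto
  have g1: "\<forall>v\<in>B. g v < b" and g2: "\<forall>u\<in>B. \<forall>v\<in>B. E u v \<longrightarrow> g u \<noteq> g v"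
    using g unfolding proper_colouring_def by auto
  have "proper_colouring (A \<union> B) E (a + b) (\<lambda>v. if v \<in> A then f v else a + g v)"
    unfolding proper_colouring_def
  proof (intro conjI ballI impI)
    fix v assume "v \<in> A \<union> B" then show "(if v \<in> A then f v else a + g v) < a + b"
      using f1 g1 by (cases "v \<in> A") auto
  next
    fix u v assume u: "u \<in> A \<union> B" and v: "v \<in> A \<union> B" and "E u v"
    then show "(if u \<in> A then f u else a + g u) \<noteq> (if v \<in> A then f v else a + g v)"
    proof (cases "u \<in> A"; cases "v \<in> A")
      assume "u \<in> A" "v \<in> A" then show ?thesis using f2 \<open>E u v\<close> by simp
    next
      assume "u \<in> A" "v \<notin> A" then show ?thesis using f1 by fastforce
    next
      assume "u \<notin> A" "v \<in> A" then show ?thesis using f1 by fastforce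
    next
      assume "u \<notin> A" "v \<notin> A" then show ?thesis using g2 u v \<open>E u v\<close> by simp
    qed
  qed
  then show ?thesis unfolding colourable_def by blast
qed

lemma col_mono:
  assumes "colourable T E k" "S \<subseteq> T" "k \<le> k'"
  shows "colourable S E k'"
proof -
  obtain f where f: "proper_colouring T E k f" using assms(1) colourable_def by blast
  have "proper_colouring S E k' f" using f assms(2,3) unfolding proper_colouring_def
    by (meson less_le_trans subsetD)
  then show ?thesis unfolding colourable_def by blast
qed
lemma col_single:
  assumes "\<forall>u. \<not> E u u"
  shows "colourable {x} E 1"
proof -
  have "proper_colouring {x} E 1 (\<lambda>_. 0)" using assms unfolding proper_colouring_def by auto
  then show ?thesis unfolding colourable_def by blast
qed

lemma col_empty: "colourable {} E 0"
  unfolding colourable_def proper_colouring_def by auto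

lemma col_card:
  assumes "finite S" "\<forall>u. \<not> E u u"
  shows "colourable S E (card S)"
  using assms(1)
proof (induction S rule: finite_induct)
  case empty
  then show ?case using col_empty by simp
next
  case (insert x F)
  have "colourable ({x} \<union> F) E (1 + card F)"
    using col_union[OF col_single[where E=E, OF assms(2)] insert.IH] .
  then show ?case using insert by simp
qed

lemma col_chi:
  assumes "finite S" "\<forall>u. \<not> E u u"
  shows "colourable S E (chromatic_number S E)"
  using col_card[where S=S and E=E, OF assms] unfolding chromatic_number_def colourable_def
  by (rule LeastI[where P="\<lambda>k. Ex (proper_colouring S E k)"])

lemma chi_le:
  assumes "colourable S E k"
  shows "chromatic_number S E \<le> k"
  using assms unfolding chromatic_number_def colourable_def by (rule Least_le)

lemma col_UN:
  assumes "finite I" "\<forall>i\<in>I. colourable (P i) E (c i)"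
  shows "colourable (\<Union> (P ` I)) E (\<Sum>i\<in>I. c i)"
  using assms
proof (induction I rule: finite_induct)
  case empty
  then show ?case using col_empty by simp
next
  case (insert x F)
  then show ?case using col_union[of "P x" E "c x" "\<Union> (P ` F)" "\<Sum>i\<in>F. c i"] by simp
qed

lemma cliques_finite:
  assumes "finite V"
  shows "finite {K. is_clique V E K}"
  by (rule finite_subset[of _ "Pow V"]) (auto simp: is_clique_def assms)

lemma clique_le:
  assumes "finite V" "is_clique V E C"
  shows "card C \<le> clique_number V E"
  unfolding clique_number_def
  using assms cliques_finite[OF assms(1), of E] by (intro Max_ge) auto

lemma clique_number_mono:
  assumes "finite V" "S \<subseteq> V"
  shows "clique_number S E \<le> clique_number V E"
  unfolding clique_number_def
proof (rule Max_mono)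
  show "card ` {K. is_clique S E K} \<subseteq> card ` {K. is_clique V E K}"
    using assms(2) unfolding is_clique_def by blast
  have "is_clique S E {}" unfolding is_clique_def by simp
  then show "card ` {K. is_clique S E K} \<noteq> {}" by blast
  show "finite (card ` {K. is_clique V E K})" using cliques_finite[OF assms(1)] by simp
qed

theorem corollary4p2:
  fixes V :: "'a set" and E :: "'a \<Rightarrow> 'a \<Rightarrow> bool"
  assumes "graph V E"
    and "\<forall>u\<in>V. \<forall>v\<in>V. E u v \<longrightarrow> perfect (non_nbrs V E u v) E"
  shows "real (chromatic_number V E)
    \<le> (real (clique_number V E) ^ 3 - real (clique_number V E) ^ 2
        + 2 * real (clique_number V E)) / 2"
proof -
  define w where "w = clique_number V E"
  have fin: "finite V" and inV: "\<And>u v. E u v \<Longrightarrow> u \<in> V \<and> v \<in> V"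
    and sym: "\<And>u v. E u v \<Longrightarrow> E v u" and irr: "\<forall>u. \<not> E u u"
    using assms(1) unfolding graph_def by auto
  have "is_clique V E {}" unfolding is_clique_def by simp
  then have "w \<in> card ` {K. is_clique V E K}"
    unfolding w_def clique_number_def using cliques_finite[OF fin, of E]
    by (intro Max_in) auto
  then obtain K where K: "is_clique V E K" "card K = w" by auto
  have KV: "K \<subseteq> V" using K unfolding is_clique_def by auto
  have finK: "finite K" using KV fin finite_subset by blast
  have Kadj: "\<And>u v. u \<in> K \<Longrightarrow> v \<in> K \<Longrightarrow> u \<noteq> v \<Longrightarrow> E u v"
    using K unfolding is_clique_def by auto
  have cle: "\<And>C. is_clique V E C \<Longrightarrow> card C \<le> w"
    unfolding w_def using clique_le[OF fin] by blast
  define A' where "A' e = {x\<in>V. \<forall>y\<in>e. \<not> E x y}" for e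
  define P where "P = {e. e \<subseteq> K \<and> card e = 2}"
  define B where "B x = insert x {y\<in>V-K. \<not> E y x \<and> (\<forall>z\<in>K-{x}. E y z)}" for x
  have finP: "finite P" unfolding P_def using finK by simp
  have cardP: "card P = w choose 2" unfolding P_def using n_subsets[OF finK] K(2) by simp
  have colA: "\<forall>e\<in>P. colourable (A' e) E w"
  proof
    fix e assume "e \<in> P"
    then obtain u v where e: "e = {u, v}" "u \<noteq> v" "u \<in> K" "v \<in> K"
      unfolding P_def card_2_iff by auto
    have Euv: "E u v" using Kadj e by auto
    have uvV: "u \<in> V" "v \<in> V" using e KV by auto
    have Aeq: "A' e = non_nbrs V E u v" unfolding A'_def non_nbrs_def e by auto
    have "perfect (A' e) E" using assms(2) uvV Euv Aeq by auto
    then have "chromatic_number (A' e) E = clique_number (A' e) E"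
      unfolding perfect_def by blast
    also have "\<dots> \<le> w" unfolding w_def
      by (rule clique_number_mono[OF fin]) (auto simp: A'_def)
    finally have le: "chromatic_number (A' e) E \<le> w" .
    have "finite (A' e)" unfolding A'_def using fin by simp
    from col_chi[where S="A' e" and E=E, OF this irr] show "colourable (A' e) E w"
      by (rule col_mono) (use le in auto)
  qed
  have colB: "\<forall>x\<in>K. colourable (B x) E 1"
  proof
    fix x assume xK: "x \<in> K"
    have "proper_colouring (B x) E 1 (\<lambda>_. 0)"
      unfolding proper_colouring_def
    proof (intro conjI ballI impI)
      fix a b assume a: "a \<in> B x" and b: "b \<in> B x" and Eab: "E a b"
      show "(0::nat) \<noteq> 0"
      proof (cases "a = x \<or> b = x")
        case True
        then show ?thesis using a b Eab sym irr unfolding B_def by auto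
      next
        case False
        then have a': "a \<in> V - K" "\<forall>z\<in>K-{x}. E a z" and b': "b \<in> V - K" "\<forall>z\<in>K-{x}. E b z"
          using a b unfolding B_def by auto
        have ab: "a \<noteq> b" using Eab irr by auto
        define C where "C = insert a (insert b (K - {x}))"
        have "is_clique V E C" unfolding C_def is_clique_def
          using a' b' KV Eab sym Kadj by (auto)
        then have "card C \<le> w" by (rule cle)
        moreover have "card C = card (K - {x}) + 2"
          unfolding C_def using a' b' ab finK by simp
        moreover have "card (K - {x}) = w - 1" using xK K(2) finK by simp
        moreover have "w \<ge> 1" using xK K(2) finK by (metis One_nat_def card_gt_0_iff emptyE less_eq_Suc_le)
        ultimately show ?thesis by simp
      qed
    qed auto
    then show "colourable (B x) E 1" unfolding colourable_def by blast
  qed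
  have cover: "V \<subseteq> \<Union> (A' ` P) \<union> \<Union> (B ` K)"
  proof
    fix v assume vV: "v \<in> V"
    show "v \<in> \<Union> (A' ` P) \<union> \<Union> (B ` K)"
    proof (cases "\<exists>e\<in>P. v \<in> A' e")
      case True
      then show ?thesis by auto
    next
      case False
      have nA: "E v y \<or> E v z" if yz: "y \<in> K" "z \<in> K" "y \<noteq> z" for y z
      proof -
        have "{y, z} \<in> P" unfolding P_def using yz by auto
        then have "v \<notin> A' {y, z}" using False by blast
        then show ?thesis using vV unfolding A'_def by auto
      qed
      show ?thesis
      proof (cases "v \<in> K")
        case True
        then show ?thesis unfolding B_def by auto
      next
        case vK: False
        have "\<exists>x\<in>K. \<not> E v x"
        proof (rule ccontr)
          assume "\<not> ?thesis"
          then have "is_clique V E (insert v K)" unfolding is_clique_def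
            using vV KV Kadj sym by auto
          then have "card (insert v K) \<le> w" by (rule cle)
          then show False using vK finK K(2) by simp
        qed
        then obtain x where x: "x \<in> K" "\<not> E v x" by blast
        have "\<forall>z\<in>K-{x}. E v z" using nA x by blast
        then have "v \<in> B x" unfolding B_def using vV vK x by auto
        then show ?thesis using x by auto
      qed
    qed
  qed
  have "colourable (\<Union> (A' ` P)) E (\<Sum>e\<in>P. w)" by (rule col_UN[OF finP colA])
  moreover have "colourable (\<Union> (B ` K)) E (\<Sum>x\<in>K. 1)" by (rule col_UN[OF finK colB])
  ultimately have "colourable (\<Union> (A' ` P) \<union> \<Union> (B ` K)) E ((w choose 2) * w + w)"
  proof -
    assume a1: "colourable (\<Union> (A' ` P)) E (\<Sum>e\<in>P. w)" and a2: "colourable (\<Union> (B ` K)) E (\<Sum>x\<in>K. 1)"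
    have "colourable (\<Union> (A' ` P) \<union> \<Union> (B ` K)) E ((\<Sum>e\<in>P. w) + (\<Sum>x\<in>K. 1))"
      using col_union[OF a1 a2] .
    then show ?thesis using cardP K(2) by simp
  qed
  then have "colourable V E ((w choose 2) * w + w)" using cover col_mono by blast
  then have chi: "chromatic_number V E \<le> (w choose 2) * w + w" by (rule chi_le)
  have ev: "even (w * (w - 1))" by (cases "even w") auto
  have "2 * (w choose 2) = w * (w - 1)" unfolding choose_two using ev by simp
  then have "real (2 * (w choose 2)) = real w * (real w - 1)"
    by (cases w) (auto simp: algebra_simps)
  then have c2: "real (w choose 2) = real w * (real w - 1) / 2" by simp
  have "real (chromatic_number V E) \<le> real (w choose 2) * real w + real w"
    using chi by (metis of_nat_add of_nat_le_iff of_nat_mult)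
  also have "\<dots> = (real w ^ 3 - real w ^ 2 + 2 * real w) / 2"
    unfolding c2 by (simp add: field_simps power2_eq_square power3_eq_cube)
  finally show ?thesis unfolding w_def .
qed

end
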